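(* Let $\bm\mu=(\mu_1,\dots,\mu_r)$ be finite positive Borel measures on the unit circle, each with infinite support, fix a square-root branch as in the context, and let $\bm n\in\mathbb N^r$. The following are equivalent: (i) there is a unique $\phi\in\operatorname{span}\{z^p\}_{p=-|\bm n|/2}^{|\bm n|/2}$ with coefficient of $z^{|\bm n|/2}$ equal to $1$ satisfying $\int\phi(z)z^{-p}\,d\mu_j(z)=0$ for $p=-n_j/2,\dots,n_j/2-1$, $j=1,\dots,r$; (ii) there is no nonzero $\phi\in\operatorname{span}\{z^p\}_{p=-|\bm n|/2}^{|\bm n|/2-1}$ satisfying these orthogonality relations; (iii) there is a unique $\psi\in\operatorname{span}\{z^p\}_{p=-|\bm n|/2}^{|\bm n|/2}$ with coefficient of $z^{-|\bm n|/2}$ equal to $1$ satisfying $\int\psi(z)z^{-p}\,d\mu_j(z)=0$ for $p=-n_j/2+1,\dots,n_j/2$, $j=1,\dots,r$; (iv) there is no nonzero $\psi\in\operatorname{span}\{z^p\}_{p=-|\bm n|/2+1}^{|\bm n|/2}$ satisfying the orthogonality relations in (iii); (v) $\det T_{\bm n}\neq0$, where $T_{\bm n}$ is the $|\bm n|\times|\bm n|$ matrix whose rows are indexed by pairs $(j,q)$, $j=1,\dots,r$, $q=n_j/2,n_j/2-1,\dots,-n_j/2+1$ (ordered by $j$, then by decreasing $q$), whose columns are indexed by $k=-|\bm n|/2,\dots,|\bm n|/2-1$, and whose $((j,q),k)$ entry is $\int z^{k}z^{q}\,d\mu_j(z)$ (with the convention $\det T_{\bm 0}=1$).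
   Context: $\partial\mathbb D=\{|z|=1\}$. Fix $t_0\in\mathbb R$ and define $z^{k/2}=|z|^{k/2}\exp(ik\arg_{[t_0,t_0+2\pi)}(z)/2)$, $k\in\mathbb Z$, with $\arg$ taking values in $[t_0,t_0+2\pi)$. For $\bm n=(n_1,\dots,n_r)$ of non-negative integers, $|\bm n|=n_1+\dots+n_r$. For integers or half-integers $a\le b$ with $b-a\in\mathbb Z$, $\operatorname{span}\{z^p\}_{p=a}^b$ is the span of $z^a,z^{a+1},\dots,z^b$ (the zero space if $a>b$). Condition (i) is the definition of $\bm n$ being "$\phi$-normal". *)

theory Defs
  imports "HOL-Probability.Probability" "Jordan_Normal_Form.Determinant"
begin

text \<open>Argument with values in the window [t0, t0 + 2 pi): shift the principal
  argument by the appropriate multiple of 2 pi.\<close>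
definition argw :: "real \<Rightarrow> complex \<Rightarrow> real" where
  "argw t0 z = Arg z - 2 * pi * of_int \<lfloor>(Arg z - t0) / (2 * pi)\<rfloor>"

text \<open>hpow t0 k z is z^(k/2) = |z|^(k/2) exp(i k arg(z) / 2), arg in [t0, t0+2pi).
  Half-integer exponents p are encoded by the integer k = 2p.\<close>
definition hpow :: "real \<Rightarrow> int \<Rightarrow> complex \<Rightarrow> complex" where
  "hpow t0 k z = complex_of_real (cmod z powr (real_of_int k / 2))
                 * exp (\<i> * complex_of_real (real_of_int k * argw t0 z / 2))"

definition msupport :: "'a::topological_space measure \<Rightarrow> 'a set" where
  "msupport M = {x \<in> space M. \<forall>U. open U \<and> x \<in> U \<longrightarrow> emeasure M (U \<inter> space M) > 0}"

text \<open>The element sum_{i=0}^{N} c_i z^{(-N+2i)/2} of span{z^p}_{p=-N/2}^{N/2}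
  (coefficient c_i belongs to z^{-N/2+i}).\<close>
definition spanfun :: "real \<Rightarrow> nat \<Rightarrow> (nat \<Rightarrow> complex) \<Rightarrow> complex \<Rightarrow> complex" where
  "spanfun t0 N c = (\<lambda>z. \<Sum>i\<le>N. c i * hpow t0 (2 * int i - int N) z)"

text \<open>Orthogonality of type (i)/(ii): int phi z^{-p} d mu_j = 0, p = -n_j/2,...,n_j/2-1
  (p = (-n_j + 2l)/2, l = 0..n_j-1).\<close>
definition orth_lo :: "real \<Rightarrow> nat \<Rightarrow> (nat \<Rightarrow> nat) \<Rightarrow> (nat \<Rightarrow> complex measure)
    \<Rightarrow> (complex \<Rightarrow> complex) \<Rightarrow> bool" where
  "orth_lo t0 r n \<mu> \<phi> \<longleftrightarrow>
     (\<forall>j<r. \<forall>l<n j. (LINT z|\<mu> j. \<phi> z * hpow t0 (int (n j) - 2 * int l) z) = 0)"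

text \<open>Orthogonality of type (iii)/(iv): p = -n_j/2+1,...,n_j/2
  (p = (-n_j + 2 + 2l)/2, l = 0..n_j-1).\<close>
definition orth_hi :: "real \<Rightarrow> nat \<Rightarrow> (nat \<Rightarrow> nat) \<Rightarrow> (nat \<Rightarrow> complex measure)
    \<Rightarrow> (complex \<Rightarrow> complex) \<Rightarrow> bool" where
  "orth_hi t0 r n \<mu> \<psi> \<longleftrightarrow>
     (\<forall>j<r. \<forall>l<n j. (LINT z|\<mu> j. \<psi> z * hpow t0 (int (n j) - 2 - 2 * int l) z) = 0)"

text \<open>Row indices (j, 2q) of T_n, ordered by j, then q = n_j/2, n_j/2-1, ..., -n_j/2+1.\<close>
definition Trows :: "nat \<Rightarrow> (nat \<Rightarrow> nat) \<Rightarrow> (nat \<times> int) list" where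
  "Trows r n = concat (map (\<lambda>j. map (\<lambda>l. (j, int (n j) - 2 * int l)) [0..<n j]) [0..<r])"

text \<open>T_n: entry ((j,q),k) = int z^k z^q d mu_j, columns k = -N/2 + b, b = 0..N-1.\<close>
definition Tmat :: "real \<Rightarrow> nat \<Rightarrow> (nat \<Rightarrow> nat) \<Rightarrow> (nat \<Rightarrow> complex measure) \<Rightarrow> complex mat" where
  "Tmat t0 r n \<mu> = (let N = (\<Sum>j<r. n j) in
     mat N N (\<lambda>(a, b). case Trows r n ! a of (j, q2) \<Rightarrow>
        LINT z|\<mu> j. hpow t0 (2 * int b - int N) z * hpow t0 q2 z))"

end

theory Submission
  imports Defs
begin


lemma det_surj:
  fixes M :: "complex mat"
  assumes M: "M \<in> carrier_mat N N" and d: "det M \<noteq> 0" and b: "b \<in> carrier_vec N"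
  shows "\<exists>v\<in>carrier_vec N. M *\<^sub>v v = b"
proof
  let ?v = "(1 / det M) \<cdot>\<^sub>v (adj_mat M *\<^sub>v b)"
  have A: "adj_mat M \<in> carrier_mat N N" using adj_mat[OF M] by auto
  show "?v \<in> carrier_vec N" using A b by auto
  have "M *\<^sub>v ?v = (1 / det M) \<cdot>\<^sub>v (M *\<^sub>v (adj_mat M *\<^sub>v b))"
    using A b M by (simp add: mult_mat_vec)
  also have "M *\<^sub>v (adj_mat M *\<^sub>v b) = (M * adj_mat M) *\<^sub>v b"
    using A b M by (simp add: assoc_mult_mat_vec)
  also have "\<dots> = det M \<cdot>\<^sub>v b" using adj_mat(2)[OF M] b
    using b by (intro eq_vecI) (auto simp: carrier_vecD)
  finally show "M *\<^sub>v ?v = b" using d by (simp add: smult_smult_assoc)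
qed

lemma GG:
  fixes M :: "complex mat" and E :: "nat \<Rightarrow> nat \<Rightarrow> complex" and h :: "nat \<Rightarrow> nat"
  assumes M: "M \<in> carrier_mat N N" and s: "s \<le> N"
    and h: "bij_betw h {..<N} ({..N} - {s})"
    and ME: "\<And>a b. a < N \<Longrightarrow> b < N \<Longrightarrow> M $$ (a,b) = E a (h b)"
  shows "(\<exists>!c. (\<forall>i>N. c i = 0) \<and> c s = 1 \<and> (\<forall>a<N. (\<Sum>i\<le>N. c i * E a i) = 0)) \<longleftrightarrow> det M \<noteq> 0"
    and "(\<not>(\<exists>c. (\<forall>i>N. c i = 0) \<and> c s = 0 \<and> (\<exists>i. c i \<noteq> 0) \<and> (\<forall>a<N. (\<Sum>i\<le>N. c i * E a i) = 0))) \<longleftrightarrow> det M \<noteq> 0"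
proof -
  define hi where "hi = inv_into {..<N} h"
  have hinj: "inj_on h {..<N}" and himg: "h ` {..<N} = {..N} - {s}" using h by (auto simp: bij_betw_def)
  have hi1: "\<And>b. b < N \<Longrightarrow> hi (h b) = b" using hinj by (simp add: hi_def inv_into_f_f)
  have hi2: "\<And>i. i \<le> N \<Longrightarrow> i \<noteq> s \<Longrightarrow> h (hi i) = i \<and> hi i < N"
  proof -
    fix i assume "i \<le> N" "i \<noteq> s"
    then have "i \<in> h ` {..<N}" using himg by auto
    then show "h (hi i) = i \<and> hi i < N" unfolding hi_def
      by (meson f_inv_into_f inv_into_into lessThan_iff)
  qed
  have hb: "\<And>b. b < N \<Longrightarrow> h b \<le> N \<and> h b \<noteq> s" using himg by auto
  have split: "(\<Sum>i\<le>N. c i * E a i) = c s * E a s + (\<Sum>b<N. c (h b) * E a (h b))" for c a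
  proof -
    have "(\<Sum>i\<le>N. c i * E a i) = c s * E a s + (\<Sum>i\<in>{..N}-{s}. c i * E a i)"
      using s by (simp add: sum.remove)
    also have "(\<Sum>i\<in>{..N}-{s}. c i * E a i) = (\<Sum>b<N. c (h b) * E a (h b))"
      using sum.reindex_bij_betw[OF h, of "\<lambda>i. c i * E a i"] by simp
    finally show ?thesis .
  qed
  have mv: "(M *\<^sub>v v) $ a = (\<Sum>b<N. v $ b * E a (h b))" if vc: "v \<in> carrier_vec N" and a: "a < N" for v a
  proof -
    have "(M *\<^sub>v v) $ a = (\<Sum>b\<in>{0..<N}. M $$ (a,b) * v $ b)"
      using M vc a by (auto simp: scalar_prod_def intro!: sum.cong)
    also have "\<dots> = (\<Sum>b<N. v $ b * E a (h b))"
      using ME[OF a] by (auto simp: atLeast0LessThan mult.commute intro!: sum.cong)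
    finally show ?thesis .
  qed
  have ker: "(\<exists>c. (\<forall>i>N. c i = 0) \<and> c s = 0 \<and> (\<exists>i. c i \<noteq> 0) \<and> (\<forall>a<N. (\<Sum>i\<le>N. c i * E a i) = 0)) \<longleftrightarrow> det M = 0"
  proof
    assume "\<exists>c. (\<forall>i>N. c i = 0) \<and> c s = 0 \<and> (\<exists>i. c i \<noteq> 0) \<and> (\<forall>a<N. (\<Sum>i\<le>N. c i * E a i) = 0)"
    then obtain c i0 where c0: "\<forall>i>N. c i = 0" "c s = 0" "c i0 \<noteq> 0"
      and cL: "\<forall>a<N. (\<Sum>i\<le>N. c i * E a i) = 0" by blast
    define v where "v = vec N (\<lambda>b. c (h b))"
    have vc: "v \<in> carrier_vec N" by (simp add: v_def)
    have i0: "i0 \<le> N" "i0 \<noteq> s" using c0 by (auto simp: not_less[symmetric])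
    then have "v $ hi i0 \<noteq> 0" using hi2 c0 by (simp add: v_def)
    then have "v \<noteq> 0\<^sub>v N" using hi2[OF i0] by auto
    moreover have "M *\<^sub>v v = 0\<^sub>v N"
    proof (rule eq_vecI)
      fix a assume "a < dim_vec (0\<^sub>v N :: complex vec)"
      then have a: "a < N" by simp
      have "(M *\<^sub>v v) $ a = (\<Sum>b<N. c (h b) * E a (h b))" using mv[OF vc a] by (simp add: v_def)
      also have "\<dots> = 0" using split[of c a] cL a c0 by simp
      finally show "(M *\<^sub>v v) $ a = 0\<^sub>v N $ a" using a by simp
    qed (use M in simp)
    ultimately show "det M = 0" using det_0_iff_vec_prod_zero[OF M] vc by blast
  next
    assume "det M = 0"
    then obtain v where vc: "v \<in> carrier_vec N" and v0: "v \<noteq> 0\<^sub>v N" and Mv: "M *\<^sub>v v = 0\<^sub>v N"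
      using det_0_iff_vec_prod_zero[OF M] by blast
    define c where "c = (\<lambda>i. if i \<le> N \<and> i \<noteq> s then v $ hi i else 0)"
    have ch: "\<And>b. b < N \<Longrightarrow> c (h b) = v $ b" using hb hi1 by (simp add: c_def)
    obtain b0 where b0: "b0 < N" "v $ b0 \<noteq> 0"
    proof -
      have "\<exists>b<N. v $ b \<noteq> 0"
      proof (rule ccontr)
        assume "\<not> ?thesis"
        then have "v = 0\<^sub>v N" using vc by (intro eq_vecI) auto
        then show False using v0 by simp
      qed
      then show ?thesis using that by blast
    qed
    show "\<exists>c. (\<forall>i>N. c i = 0) \<and> c s = 0 \<and> (\<exists>i. c i \<noteq> 0) \<and> (\<forall>a<N. (\<Sum>i\<le>N. c i * E a i) = 0)"
    proof (intro exI[of _ c] conjI allI impI)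
      show "c i = 0" if "i > N" for i using that by (simp add: c_def)
      show "c s = 0" by (simp add: c_def)
      show "\<exists>i. c i \<noteq> 0" using ch b0 by metis
      fix a assume a: "a < N"
      have "(\<Sum>i\<le>N. c i * E a i) = (\<Sum>b<N. v $ b * E a (h b))"
        using split[of c a] ch by (simp add: c_def)
      also have "\<dots> = (M *\<^sub>v v) $ a" using mv[OF vc a] by simp
      also have "\<dots> = 0" using Mv a by simp
      finally show "(\<Sum>i\<le>N. c i * E a i) = 0" .
    qed
  qed
  show "(\<not>(\<exists>c. (\<forall>i>N. c i = 0) \<and> c s = 0 \<and> (\<exists>i. c i \<noteq> 0) \<and> (\<forall>a<N. (\<Sum>i\<le>N. c i * E a i) = 0))) \<longleftrightarrow> det M \<noteq> 0"
    using ker by blast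
  have lin_diff: "(\<Sum>i\<le>N. (c1 i - c2 i) * E a i) = (\<Sum>i\<le>N. c1 i * E a i) - (\<Sum>i\<le>N. c2 i * E a i)" for c1 c2 a
    by (simp add: left_diff_distrib sum_subtractf)
  have lin_add: "(\<Sum>i\<le>N. (c1 i + c2 i) * E a i) = (\<Sum>i\<le>N. c1 i * E a i) + (\<Sum>i\<le>N. c2 i * E a i)" for c1 c2 a
    by (simp add: distrib_right sum.distrib)
  show "(\<exists>!c. (\<forall>i>N. c i = 0) \<and> c s = 1 \<and> (\<forall>a<N. (\<Sum>i\<le>N. c i * E a i) = 0)) \<longleftrightarrow> det M \<noteq> 0"
    (is "(\<exists>!c. ?P c) \<longleftrightarrow> _")
  proof
    assume ex1: "\<exists>!c. ?P c"
    show "det M \<noteq> 0"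
    proof
      assume "det M = 0"
      then obtain d i0 where d: "\<forall>i>N. d i = 0" "d s = 0" "d i0 \<noteq> 0"
        and dL: "\<forall>a<N. (\<Sum>i\<le>N. d i * E a i) = 0" using ker by blast
      from ex1 obtain c where c: "?P c" by blast
      have uq: "\<And>x y. ?P x \<Longrightarrow> ?P y \<Longrightarrow> x = y" using ex1 by blast
      have "?P (\<lambda>i. c i + d i)"
      proof (intro conjI allI impI)
        show "c i + d i = 0" if "i > N" for i using c d that by simp
        show "c s + d s = 1" using c d by simp
        fix a assume "a < N"
        then show "(\<Sum>i\<le>N. (c i + d i) * E a i) = 0" using c dL lin_add[of c d a] by simp
      qed
      then have "(\<lambda>i. c i + d i) = c" by (rule uq[OF _ c])
      then have "c i0 + d i0 = c i0" using fun_cong[of "\<lambda>i. c i + d i" c i0] by simp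
      then show False using d by simp
    qed
  next
    assume dM: "det M \<noteq> 0"
    have bc: "vec N (\<lambda>a. - E a s) \<in> carrier_vec N" by simp
    obtain v where vc: "v \<in> carrier_vec N" and Mv: "M *\<^sub>v v = vec N (\<lambda>a. - E a s)"
      using det_surj[OF M dM bc] by blast
    define c where "c = (\<lambda>i. if i = s then 1 else if i \<le> N then v $ hi i else 0)"
    have ch: "\<And>b. b < N \<Longrightarrow> c (h b) = v $ b" using hb hi1 by (simp add: c_def)
    have Pc: "?P c"
    proof (intro conjI allI impI)
      show "c i = 0" if "i > N" for i using that s by (simp add: c_def)
      show "c s = 1" by (simp add: c_def)
      fix a assume a: "a < N"
      have "(\<Sum>i\<le>N. c i * E a i) = E a s + (\<Sum>b<N. v $ b * E a (h b))"
        using split[of c a] ch \<open>c s = 1\<close> by simp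
      also have "\<dots> = E a s + (M *\<^sub>v v) $ a" using mv[OF vc a] by simp
      also have "\<dots> = 0" using Mv a by simp
      finally show "(\<Sum>i\<le>N. c i * E a i) = 0" .
    qed
    show "\<exists>!c. ?P c"
    proof (rule ex1I[of _ c])
      show "?P c" by (rule Pc)
      fix c1 assume c1: "?P c1"
      have "\<not> (\<exists>i. c1 i - c i \<noteq> 0)"
      proof
        assume "\<exists>i. c1 i - c i \<noteq> 0"
        moreover have "\<forall>a<N. (\<Sum>i\<le>N. (c1 i - c i) * E a i) = 0" using c1 Pc lin_diff[of c1 c] by simp
        ultimately have "\<exists>d. (\<forall>i>N. d i = 0) \<and> d s = 0 \<and> (\<exists>i. d i \<noteq> 0) \<and> (\<forall>a<N. (\<Sum>i\<le>N. d i * E a i) = 0)"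
          using c1 Pc by (intro exI[of _ "\<lambda>i. c1 i - c i"]) simp
        then show False using ker dM by blast
      qed
      then show "c1 = c" by auto
    qed
  qed
qed



lemma borel_measurable_Arg: "Arg \<in> borel_measurable borel"
proof -
  define F where "F = (\<lambda>z. if z \<in> - \<real>\<^sub>\<le>\<^sub>0 then Arg z else pi)"
  have 1: "F \<in> borel_measurable borel" unfolding F_def
    by (rule borel_measurable_continuous_on_if)
       (auto simp: continuous_on_Arg open_Compl intro!: borel_open)
  have 2: "Arg = (\<lambda>z. if z \<in> {0} then 0 else F z)"
  proof (rule ext)
    fix z :: complex
    show "Arg z = (if z \<in> {0} then 0 else F z)"
    proof (cases "z = 0")
      case True then show ?thesis by (simp add: Arg_zero)
    next
      case False
      then have "Re z \<noteq> 0 \<or> Im z \<noteq> 0" by (simp add: complex_eq_iff)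
      then show ?thesis using False by (auto simp: F_def Arg_eq_pi complex_nonpos_Reals_iff complex_is_Real_iff)
    qed
  qed
  have 3: "(\<lambda>z. if z \<in> {0} then 0 else F z) \<in> borel_measurable borel"
    by (rule measurable_If_set[OF _ 1]) (auto intro: borel_closed)
  show ?thesis using 3 by (simp only: 2[symmetric])
qed

lemma borel_measurable_hpow: "hpow t0 k \<in> borel_measurable borel"
proof -
  have "(\<lambda>x::real. real_of_int \<lfloor>x\<rfloor>) \<in> borel_measurable borel" by (rule borel_measurable_real_floor)
  note [measurable] = this borel_measurable_Arg
  show ?thesis unfolding hpow_def[abs_def] argw_def by measurable
qed


lemma hpow_mult: "hpow t0 a z * hpow t0 b z = hpow t0 (a + b) z"
proof -
  have p: "cmod z powr (real_of_int (a+b) / 2) = cmod z powr (real_of_int a/2) * cmod z powr (real_of_int b/2)"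
    by (simp add: powr_add[symmetric] add_divide_distrib)
  have e: "exp (\<i> * complex_of_real (real_of_int (a+b) * argw t0 z / 2)) = exp (\<i> * complex_of_real (real_of_int a * argw t0 z / 2)) * exp (\<i> * complex_of_real (real_of_int b * argw t0 z / 2))"
    by (simp add: exp_add[symmetric] distrib_left distrib_right add_divide_distrib)
  show ?thesis unfolding hpow_def p e by (simp add: mult_ac)
qed

lemma hpow_norm: "cmod z = 1 \<Longrightarrow> norm (hpow t0 k z) = 1"
  by (simp add: hpow_def norm_mult)

lemma integrable_hpow:
  assumes S: "sets M = sets (restrict_space borel (sphere (0::complex) 1))" and F: "finite_measure M"
  shows "integrable M (hpow t0 k)"
proof -
  have sp: "space M = sphere 0 1" using sets_eq_imp_space_eq[OF S] by (simp add: space_restrict_space)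
  have m: "hpow t0 k \<in> borel_measurable M"
    by (subst measurable_cong_sets[OF S refl]) (rule measurable_restrict_space1[OF borel_measurable_hpow])
  show ?thesis
    by (rule finite_measure.integrable_const_bound[OF F, where B=1])
       (auto simp: sp hpow_norm m intro!: AE_I2)
qed

lemma lint_span:
  assumes I: "\<And>k. integrable M (hpow t0 k)"
  shows "(LINT z|M. spanfun t0 N c z * hpow t0 q z)
       = (\<Sum>i\<le>N. c i * (LINT z|M. hpow t0 (2 * int i - int N) z * hpow t0 q z))"
proof -
  have eq: "(\<lambda>z. spanfun t0 N c z * hpow t0 q z)
      = (\<lambda>z. \<Sum>i\<le>N. c i * (hpow t0 (2 * int i - int N) z * hpow t0 q z))"
    by (simp add: spanfun_def sum_distrib_right mult.assoc fun_eq_iff)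
  have "(LINT z|M. spanfun t0 N c z * hpow t0 q z)
      = (\<Sum>i\<le>N. LINT z|M. c i * (hpow t0 (2 * int i - int N) z * hpow t0 q z))"
    unfolding eq
    by (rule Bochner_Integration.integral_sum[where f="\<lambda>i z. c i * (hpow t0 (2 * int i - int N) z * hpow t0 q z)"])
       (simp only: hpow_mult, intro integrable_mult_right I)
  also have "\<dots> = (\<Sum>i\<le>N. c i * (LINT z|M. hpow t0 (2 * int i - int N) z * hpow t0 q z))"
    by (simp only: integral_mult_right_zero)
  finally show ?thesis .
qed

lemma length_Trows: "length (Trows r n) = (\<Sum>j<r. n j)"
  by (simp add: Trows_def length_concat comp_def sum_set_upt_conv_sum_list_nat[symmetric] atLeast0LessThan)

lemma set_Trows: "x \<in> set (Trows r n) \<longleftrightarrow> (\<exists>j l. j < r \<and> l < n j \<and> x = (j, int (n j) - 2 * int l))"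
  by (fastforce simp: Trows_def image_iff)

lemma all_Trows: "(\<forall>a<length (Trows r n). P (Trows r n ! a)) \<longleftrightarrow> (\<forall>j<r. \<forall>l<n j. P (j, int (n j) - 2 * int l))"
proof -
  have "(\<forall>a<length (Trows r n). P (Trows r n ! a)) \<longleftrightarrow> (\<forall>x\<in>set (Trows r n). P x)"
    by (simp add: all_set_conv_all_nth)
  also have "\<dots> \<longleftrightarrow> (\<forall>j<r. \<forall>l<n j. P (j, int (n j) - 2 * int l))"
    unfolding Ball_def set_Trows by blast
  finally show ?thesis .
qed


theorem proposition2p2:
  fixes \<mu> :: "nat \<Rightarrow> complex measure" and n :: "nat \<Rightarrow> nat" and r :: nat and t0 :: real
  assumes circ: "\<forall>j<r. sets (\<mu> j) = sets (restrict_space borel (sphere (0::complex) 1))"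
    and fin: "\<forall>j<r. finite_measure (\<mu> j)"
    and inf_supp: "\<forall>j<r. infinite (msupport (\<mu> j))"
  defines "N \<equiv> \<Sum>j<r. n j"
  defines "P1 \<equiv> (\<exists>!c. (\<forall>i>N. c i = 0) \<and> c N = 1 \<and> orth_lo t0 r n \<mu> (spanfun t0 N c))"
    and "P2 \<equiv> \<not> (\<exists>c. (\<forall>i\<ge>N. c i = 0) \<and> (\<exists>i. c i \<noteq> 0) \<and> orth_lo t0 r n \<mu> (spanfun t0 N c))"
    and "P3 \<equiv> (\<exists>!c. (\<forall>i>N. c i = 0) \<and> c 0 = 1 \<and> orth_hi t0 r n \<mu> (spanfun t0 N c))"
    and "P4 \<equiv> \<not> (\<exists>c. (\<forall>i>N. c i = 0) \<and> c 0 = 0 \<and> (\<exists>i. c i \<noteq> 0) \<and> orth_hi t0 r n \<mu> (spanfun t0 N c))"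
    and "P5 \<equiv> det (Tmat t0 r n \<mu>) \<noteq> 0"
  shows "(P1 \<longleftrightarrow> P2) \<and> (P2 \<longleftrightarrow> P3) \<and> (P3 \<longleftrightarrow> P4) \<and> (P4 \<longleftrightarrow> P5)"
  proof -
  have I: "\<And>j k. j < r \<Longrightarrow> integrable (\<mu> j) (hpow t0 k)" using circ fin integrable_hpow by blast
  define Ef where "Ef = (\<lambda>(x::nat\<times>int) i. LINT z|\<mu> (fst x). hpow t0 (2 * int i - int N) z * hpow t0 (snd x) z)"
  define Eg where "Eg = (\<lambda>(x::nat\<times>int) i. LINT z|\<mu> (fst x). hpow t0 (2 * int i - int N) z * hpow t0 (snd x - 2) z)"
  define E where "E = (\<lambda>a. Ef (Trows r n ! a))"
  define E2 where "E2 = (\<lambda>a. Eg (Trows r n ! a))"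
  have len: "length (Trows r n) = N" by (simp add: length_Trows N_def)
  have olo: "orth_lo t0 r n \<mu> (spanfun t0 N c) \<longleftrightarrow> (\<forall>a<N. (\<Sum>i\<le>N. c i * E a i) = 0)" for c
  proof -
    have "orth_lo t0 r n \<mu> (spanfun t0 N c) \<longleftrightarrow> (\<forall>j<r. \<forall>l<n j. (\<Sum>i\<le>N. c i * Ef (j, int (n j) - 2 * int l) i) = 0)"
      unfolding orth_lo_def Ef_def by (auto simp: lint_span[OF I])
    also have "\<dots> \<longleftrightarrow> (\<forall>a<N. (\<Sum>i\<le>N. c i * E a i) = 0)"
      unfolding E_def using all_Trows[of r n "\<lambda>x. (\<Sum>i\<le>N. c i * Ef x i) = 0"] len by simp
    finally show ?thesis .
  qed
  have ex: "\<And>j l. int (n j) - 2 - 2 * int l = snd (j, int (n j) - 2 * int l) - 2" by simp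
  have ohi: "orth_hi t0 r n \<mu> (spanfun t0 N c) \<longleftrightarrow> (\<forall>a<N. (\<Sum>i\<le>N. c i * E2 a i) = 0)" for c
  proof -
    have "orth_hi t0 r n \<mu> (spanfun t0 N c) \<longleftrightarrow> (\<forall>j<r. \<forall>l<n j. (\<Sum>i\<le>N. c i * Eg (j, int (n j) - 2 * int l) i) = 0)"
      unfolding orth_hi_def Eg_def ex by (auto simp: lint_span[OF I])
    also have "\<dots> \<longleftrightarrow> (\<forall>a<N. (\<Sum>i\<le>N. c i * E2 a i) = 0)"
      unfolding E2_def using all_Trows[of r n "\<lambda>x. (\<Sum>i\<le>N. c i * Eg x i) = 0"] len by simp
    finally show ?thesis .
  qed
  have Tm: "Tmat t0 r n \<mu> \<in> carrier_mat N N" by (simp add: Tmat_def N_def Let_def)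
  have TE: "Tmat t0 r n \<mu> $$ (a,b) = E a b" if "a < N" "b < N" for a b
    using that by (simp add: Tmat_def Let_def N_def[symmetric] E_def Ef_def split_beta)
  have TE2: "Tmat t0 r n \<mu> $$ (a,b) = E2 a (Suc b)" if "a < N" "b < N" for a b
  proof -
    have "\<And>z q. hpow t0 (2 * int (Suc b) - int N) z * hpow t0 (q - 2) z = hpow t0 (2 * int b - int N) z * hpow t0 q z"
    proof -
      fix z q
      have "2 * int (Suc b) - int N + (q - 2) = 2 * int b - int N + q" by simp
      then show "hpow t0 (2 * int (Suc b) - int N) z * hpow t0 (q - 2) z = hpow t0 (2 * int b - int N) z * hpow t0 q z"
        by (simp only: hpow_mult)
    qed
    then show ?thesis using TE[OF that] by (simp add: E_def E2_def Ef_def Eg_def split_beta)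
  qed
  have b1: "bij_betw id {..<N} ({..N} - {N})" by (auto simp: bij_betw_def)
  have "Suc ` {..<N} = {..N} - {0}" by (auto simp: image_Suc_lessThan)
  then have b2: "bij_betw Suc {..<N} ({..N} - {0})" by (auto simp: bij_betw_def)
  have TE': "\<And>a b. a < N \<Longrightarrow> b < N \<Longrightarrow> Tmat t0 r n \<mu> $$ (a,b) = E a (id b)" using TE by simp
  note G1 = GG[OF Tm order_refl b1 TE']
  note G2 = GG[OF Tm le0 b2 TE2]
  have e1: "P1 \<longleftrightarrow> P5" unfolding P1_def P5_def olo by (rule G1(1))
  have geq: "\<And>c::nat\<Rightarrow>complex. (\<forall>i\<ge>N. c i = 0) \<longleftrightarrow> (\<forall>i>N. c i = 0) \<and> c N = 0"
    by (auto simp: le_less)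
  have e2: "P2 \<longleftrightarrow> P5" unfolding P2_def P5_def olo geq conj_assoc by (rule G1(2))
  have e3: "P3 \<longleftrightarrow> P5" unfolding P3_def P5_def ohi by (rule G2(1))
  have e4: "P4 \<longleftrightarrow> P5" unfolding P4_def P5_def ohi by (rule G2(2))
  show ?thesis using e1 e2 e3 e4 by blast
qed

end
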